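(* Let $n\geq 2$. The Jonquières subgroup $\mathcal{B}_n$ is maximal among all solvable subgroups of $\mathrm{Aut}(\mathbb{A}^n_{\mathbb{C}})$: if $H$ is a solvable subgroup of $\mathrm{Aut}(\mathbb{A}^n_{\mathbb{C}})$ with $\mathcal{B}_n\subseteq H$, then $H=\mathcal{B}_n$.
   Context: $\mathrm{Aut}(\mathbb{A}^n_{\mathbb{C}})$ is the group of polynomial automorphisms of complex affine $n$-space; an automorphism is written $f=(f_1,\dots,f_n)$ with $f_i=f^*(x_i)\in\mathbb{C}[x_1,\dots,x_n]$, and composition is $g\circ f=(g_1(f_1,\dots,f_n),\dots,g_n(f_1,\dots,f_n))$. The Jonquières (triangular) subgroup is $\mathcal{B}_n=\{f\in\mathrm{Aut}(\mathbb{A}^n_{\mathbb{C}}) : f_i\in\mathbb{C}[x_i,\dots,x_n] \text{ for all } i\}$, equivalently the automorphisms with $f_i=a_ix_i+p_i$, $a_i\in\mathbb{C}^*$, $p_i\in\mathbb{C}[x_{i+1},\dots,x_n]$. A group is solvable if some iterated derived subgroup is trivial. *)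

theory Defs
  imports Complex_Main "HOL-Algebra.Solvable_Groups"
begin

text \<open>Points of complex affine n-space: functions nat => complex vanishing
  at all indices >= n (coordinates x_0, ..., x_(n-1)).\<close>

inductive_set poly_fun :: "nat \<Rightarrow> ((nat \<Rightarrow> complex) \<Rightarrow> complex) set"
  for n :: nat where
  pf_const: "(\<lambda>p. c) \<in> poly_fun n"
| pf_var: "i < n \<Longrightarrow> (\<lambda>p. p i) \<in> poly_fun n"
| pf_add: "f \<in> poly_fun n \<Longrightarrow> g \<in> poly_fun n \<Longrightarrow> (\<lambda>p. f p + g p) \<in> poly_fun n"
| pf_mult: "f \<in> poly_fun n \<Longrightarrow> g \<in> poly_fun n \<Longrightarrow> (\<lambda>p. f p * g p) \<in> poly_fun n"

definition poly_map :: "nat \<Rightarrow> ((nat \<Rightarrow> complex) \<Rightarrow> (nat \<Rightarrow> complex)) set" where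
  "poly_map n = {F. (\<forall>i<n. (\<lambda>p. F p i) \<in> poly_fun n) \<and> (\<forall>p i. n \<le> i \<longrightarrow> F p i = 0)}"

definition aff_id :: "nat \<Rightarrow> (nat \<Rightarrow> complex) \<Rightarrow> (nat \<Rightarrow> complex)" where
  "aff_id n = (\<lambda>p i. if i < n then p i else 0)"

definition aut :: "nat \<Rightarrow> ((nat \<Rightarrow> complex) \<Rightarrow> (nat \<Rightarrow> complex)) set" where
  "aut n = {F \<in> poly_map n. \<exists>G \<in> poly_map n. G \<circ> F = aff_id n \<and> F \<circ> G = aff_id n}"

definition aut_group :: "nat \<Rightarrow> ((nat \<Rightarrow> complex) \<Rightarrow> (nat \<Rightarrow> complex)) monoid" where
  "aut_group n = \<lparr> carrier = aut n, mult = (\<lambda>g f. g \<circ> f), one = aff_id n \<rparr>"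

definition jonq :: "nat \<Rightarrow> ((nat \<Rightarrow> complex) \<Rightarrow> (nat \<Rightarrow> complex)) set" where
  "jonq n = {F \<in> aut n. \<forall>i<n. \<forall>p q. (\<forall>j. i \<le> j \<and> j < n \<longrightarrow> p j = q j) \<longrightarrow> F p i = F q i}"

end

theory Submission
  imports Defs "HOL-Analysis.Analysis"
begin

lemma pf_local: "f \<in> poly_fun m \<Longrightarrow> (\<forall>k<m. p k = q k) \<Longrightarrow> f p = f q"
  by (induction rule: poly_fun.induct) auto

lemma pf_mono: "f \<in> poly_fun m \<Longrightarrow> m \<le> m' \<Longrightarrow> f \<in> poly_fun m'"
  by (induction rule: poly_fun.induct) (auto intro: poly_fun.intros)

lemma pf_subst:
  "f \<in> poly_fun m \<Longrightarrow> (\<forall>k<m. \<sigma> k \<in> poly_fun m') \<Longrightarrow> (\<lambda>p. f (\<lambda>k. \<sigma> k p)) \<in> poly_fun m'"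
proof (induction rule: poly_fun.induct)
  case (pf_var i) then show ?case by simp
qed (auto intro: poly_fun.intros)

lemma pf_cont: "f \<in> poly_fun m \<Longrightarrow> continuous_on UNIV (\<lambda>t. f (p(k := t)))"
proof (induction rule: poly_fun.induct)
  case (pf_var i) then show ?case by (cases "i = k") (auto intro: continuous_intros)
qed (auto intro: continuous_intros)

lemma pf_isCont: "f \<in> poly_fun m \<Longrightarrow> isCont (\<lambda>t. f (p(k := t))) t0"
  using pf_cont continuous_on_eq_continuous_at by blast

lemma pf_const': "(\<lambda>p. c) \<in> poly_fun m" by (rule pf_const)

lemma pf_cmul: "f \<in> poly_fun m \<Longrightarrow> (\<lambda>p. c * f p) \<in> poly_fun m"
  using pf_mult[OF pf_const] by blast

lemma pf_sum: "finite A \<Longrightarrow> (\<forall>a\<in>A. f a \<in> poly_fun m) \<Longrightarrow> (\<lambda>p. \<Sum>a\<in>A. f a p) \<in> poly_fun m"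
proof (induction rule: finite_induct)
  case empty then show ?case by (simp add: pf_const)
next
  case (insert x F) then show ?case by (simp add: pf_add)
qed

lemma pf_expand:
  assumes "f \<in> poly_fun n"
  shows "\<exists>f' c. f' \<in> poly_fun (Suc n) \<and> (\<forall>q. f (\<lambda>k. a k + q n * q k) = f a + q n * f' q)
     \<and> (\<forall>q. q n = 0 \<longrightarrow> f' q = (\<Sum>k<n. c k * q k))"
  using assms
proof (induction rule: poly_fun.induct)
  case (pf_const c0)
  show ?case by (rule exI[of _ "\<lambda>q. 0"], rule exI[of _ "\<lambda>k. 0"]) (simp add: poly_fun.pf_const)
next
  case (pf_var i)
  show ?case
    apply (rule exI[of _ "\<lambda>q. q i"], rule exI[of _ "\<lambda>k. if k = i then 1 else 0"])
  proof (intro conjI allI impI)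
    show "(\<lambda>q. q i) \<in> poly_fun (Suc n)" using pf_var by (auto intro: poly_fun.pf_var)
    fix q :: "nat \<Rightarrow> complex"
    have "(\<Sum>k<n. (if k = i then 1 else 0) * q k) = (\<Sum>k<n. if k = i then q k else 0)"
      by (rule sum.cong) auto
    then show "q i = (\<Sum>k<n. (if k = i then 1 else 0) * q k)" using pf_var by simp
  qed simp
next
  case (pf_add f g)
  then obtain f' c g' d where f': "f' \<in> poly_fun (Suc n)" "\<forall>q. f (\<lambda>k. a k + q n * q k) = f a + q n * f' q"
     "\<forall>q. q n = 0 \<longrightarrow> f' q = (\<Sum>k<n. c k * q k)"
    and g': "g' \<in> poly_fun (Suc n)" "\<forall>q. g (\<lambda>k. a k + q n * q k) = g a + q n * g' q"
     "\<forall>q. q n = 0 \<longrightarrow> g' q = (\<Sum>k<n. d k * q k)" by blast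
  show ?case
    apply (rule exI[of _ "\<lambda>q. f' q + g' q"], rule exI[of _ "\<lambda>k. c k + d k"])
    using f' g' by (auto intro: poly_fun.pf_add simp: algebra_simps sum.distrib)
next
  case (pf_mult f g)
  then obtain f' c g' d where f': "f' \<in> poly_fun (Suc n)" "\<forall>q. f (\<lambda>k. a k + q n * q k) = f a + q n * f' q"
     "\<forall>q. q n = 0 \<longrightarrow> f' q = (\<Sum>k<n. c k * q k)"
    and g': "g' \<in> poly_fun (Suc n)" "\<forall>q. g (\<lambda>k. a k + q n * q k) = g a + q n * g' q"
     "\<forall>q. q n = 0 \<longrightarrow> g' q = (\<Sum>k<n. d k * q k)" by blast
  have mem: "(\<lambda>q. f a * g' q + g a * f' q + q n * (f' q * g' q)) \<in> poly_fun (Suc n)"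
    by (intro poly_fun.pf_add poly_fun.pf_mult f'(1) g'(1) poly_fun.pf_const poly_fun.pf_var) simp
  show ?case
    apply (rule exI[of _ "\<lambda>q. f a * g' q + g a * f' q + q n * (f' q * g' q)"],
           rule exI[of _ "\<lambda>k. f a * d k + g a * c k"])
    using f' g' mem by (auto simp: algebra_simps sum.distrib sum_distrib_left)
qed

lemma pm_local: "F \<in> poly_map n \<Longrightarrow> (\<forall>k<n. p k = q k) \<Longrightarrow> F p = F q"
  unfolding poly_map_def
proof (rule ext)
  fix i assume F: "F \<in> {F. (\<forall>i<n. (\<lambda>p. F p i) \<in> poly_fun n) \<and> (\<forall>p i. n \<le> i \<longrightarrow> F p i = 0)}"
    and pq: "\<forall>k<n. p k = q k"
  show "F p i = F q i"
  proof (cases "i < n")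
    case True then show ?thesis using F pq pf_local[of "\<lambda>p. F p i" n p q] by auto
  qed (use F in auto)
qed

lemma pm_comp: "F \<in> poly_map n \<Longrightarrow> G \<in> poly_map n \<Longrightarrow> G \<circ> F \<in> poly_map n"
  unfolding poly_map_def
proof (safe)
  fix i assume F: "\<forall>i<n. (\<lambda>p. F p i) \<in> poly_fun n" and G: "\<forall>i<n. (\<lambda>p. G p i) \<in> poly_fun n"
    and i: "i < n"
  have "(\<lambda>p. (\<lambda>q. G q i) (\<lambda>k. F p k)) \<in> poly_fun n"
    by (rule pf_subst) (use F G i in auto)
  then show "(\<lambda>p. (G \<circ> F) p i) \<in> poly_fun n" by simp
qed auto

lemma aff_id_pm: "aff_id n \<in> poly_map n"
  unfolding poly_map_def aff_id_def by (auto intro: poly_fun.intros)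

lemma pm_id_right: "F \<in> poly_map n \<Longrightarrow> F \<circ> aff_id n = F"
  by (rule ext) (simp add: pm_local[of F n _] aff_id_def)

lemma pm_id_left: "F \<in> poly_map n \<Longrightarrow> aff_id n \<circ> F = F"
  by (auto simp: poly_map_def aff_id_def fun_eq_iff)

lemma aut_group_simps [simp]:
  "carrier (aut_group n) = aut n" "monoid.mult (aut_group n) = (\<lambda>g f. g \<circ> f)" "one (aut_group n) = aff_id n"
  by (simp_all add: aut_group_def)

lemma aut_pm: "F \<in> aut n \<Longrightarrow> F \<in> poly_map n" by (simp add: aut_def)

lemma group_aut: "group (aut_group n)"
proof (rule groupI)
  fix x y assume "x \<in> carrier (aut_group n)" "y \<in> carrier (aut_group n)"
  then obtain x' y' where x: "x \<in> poly_map n" "x' \<in> poly_map n" "x' \<circ> x = aff_id n" "x \<circ> x' = aff_id n"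
    and y: "y \<in> poly_map n" "y' \<in> poly_map n" "y' \<circ> y = aff_id n" "y \<circ> y' = aff_id n"
    by (auto simp: aut_def)
  have "(y' \<circ> x') \<circ> (x \<circ> y) = y' \<circ> (x' \<circ> x) \<circ> y" by (simp add: comp_assoc)
  also have "\<dots> = aff_id n" using x y by (simp add: pm_id_left pm_id_right)
  finally have 1: "(y' \<circ> x') \<circ> (x \<circ> y) = aff_id n" .
  have "(x \<circ> y) \<circ> (y' \<circ> x') = x \<circ> (y \<circ> y') \<circ> x'" by (simp add: comp_assoc)
  also have "\<dots> = aff_id n" using x y by (simp add: pm_id_right)
  finally have 2: "(x \<circ> y) \<circ> (y' \<circ> x') = aff_id n" .
  show "x \<otimes>\<^bsub>aut_group n\<^esub> y \<in> carrier (aut_group n)"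
    using 1 2 x y by (auto simp: aut_def intro!: pm_comp bexI[of _ "y' \<circ> x'"])
next
  show "\<one>\<^bsub>aut_group n\<^esub> \<in> carrier (aut_group n)"
    using aff_id_pm by (auto simp: aut_def intro!: bexI[of _ "aff_id n"] pm_id_left)
next
  fix x y z show "x \<otimes>\<^bsub>aut_group n\<^esub> y \<otimes>\<^bsub>aut_group n\<^esub> z = x \<otimes>\<^bsub>aut_group n\<^esub> (y \<otimes>\<^bsub>aut_group n\<^esub> z)"
    by (simp add: comp_assoc)
next
  fix x assume "x \<in> carrier (aut_group n)" then show "\<one>\<^bsub>aut_group n\<^esub> \<otimes>\<^bsub>aut_group n\<^esub> x = x"
    by (simp add: aut_def pm_id_left)
next
  fix x assume "x \<in> carrier (aut_group n)"
  then obtain x' where x: "x \<in> poly_map n" "x' \<in> poly_map n" "x' \<circ> x = aff_id n" "x \<circ> x' = aff_id n"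
    by (auto simp: aut_def)
  then have "x' \<in> aut n" by (auto simp: aut_def)
  then show "\<exists>y\<in>carrier (aut_group n). y \<otimes>\<^bsub>aut_group n\<^esub> x = \<one>\<^bsub>aut_group n\<^esub>"
    using x by auto
qed

lemma aut_inv:
  assumes "F \<in> aut n" "F' \<in> poly_map n" "F' \<circ> F = aff_id n"
  shows "inv\<^bsub>aut_group n\<^esub> F = F'"
proof -
  obtain G where G: "G \<in> poly_map n" "G \<circ> F = aff_id n" "F \<circ> G = aff_id n" using assms(1) by (auto simp: aut_def)
  have "F' \<in> aut n" using assms G unfolding aut_def
    by (auto intro!: bexI[of _ F]) (metis (no_types) G(1) G(3) assms(3) comp_assoc pm_id_left pm_id_right)
  then show ?thesis using group.inv_equality[OF group_aut] assms by simp
qed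

definition pfam :: "nat \<Rightarrow> (complex \<Rightarrow> (nat \<Rightarrow> complex) \<Rightarrow> (nat \<Rightarrow> complex)) \<Rightarrow> bool" where
  "pfam n \<Phi> \<longleftrightarrow> (\<forall>t. \<Phi> t \<in> poly_map n) \<and> (\<forall>i<n. (\<lambda>p. \<Phi> (p n) p i) \<in> poly_fun (Suc n))"

lemma pfam_const: "F \<in> poly_map n \<Longrightarrow> pfam n (\<lambda>t. F)"
  unfolding pfam_def poly_map_def by (auto intro: pf_mono)

lemma pfam_comp:
  assumes "pfam n \<Phi>" "pfam n \<Psi>" shows "pfam n (\<lambda>t. \<Phi> t \<circ> \<Psi> t)"
  unfolding pfam_def
proof (intro conjI allI impI)
  show "\<And>t. \<Phi> t \<circ> \<Psi> t \<in> poly_map n" using assms by (auto simp: pfam_def intro: pm_comp)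
  fix i assume i: "i < n"
  define \<sigma> where "\<sigma> k = (if k = n then (\<lambda>p. p n) else (\<lambda>p. \<Psi> (p n) p k))" for k
  have "(\<lambda>p. (\<lambda>q. \<Phi> (q n) q i) (\<lambda>k. \<sigma> k p)) \<in> poly_fun (Suc n)"
    by (rule pf_subst) (use assms i in \<open>auto simp: pfam_def \<sigma>_def intro: poly_fun.pf_var\<close>)
  moreover have "(\<lambda>q. \<Phi> (q n) q i) (\<lambda>k. \<sigma> k p) = \<Phi> (p n) (\<Psi> (p n) p) i" for p
  proof -
    have "\<Phi> (p n) (\<lambda>k. \<sigma> k p) = \<Phi> (p n) (\<Psi> (p n) p)"
      by (rule pm_local[of _ n]) (use assms in \<open>auto simp: pfam_def \<sigma>_def\<close>)
    then show ?thesis by (simp add: \<sigma>_def)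
  qed
  ultimately show "(\<lambda>p. (\<Phi> (p n) \<circ> \<Psi> (p n)) p i) \<in> poly_fun (Suc n)" by simp
qed

lemma lim_id:
  assumes "pfam n \<Phi>" "\<forall>t. t \<noteq> 0 \<longrightarrow> \<Phi> t = aff_id n"
  shows "\<Phi> 0 = aff_id n"
proof (intro ext)
  fix p i
  show "\<Phi> 0 p i = aff_id n p i"
  proof (cases "i < n")
    case False then show ?thesis using assms(1) by (auto simp: pfam_def poly_map_def aff_id_def)
  next
    case True
    define h where "h t = (\<lambda>q. \<Phi> (q n) q i) (p(n := t))" for t
    have h: "h t = \<Phi> t p i" for t
    proof -
      have "\<Phi> t (p(n := t)) = \<Phi> t p" by (rule pm_local[of _ n]) (use assms(1) in \<open>auto simp: pfam_def\<close>)
      then show ?thesis by (simp add: h_def)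
    qed
    have "isCont h 0" unfolding h_def
      by (rule pf_isCont) (use assms(1) True in \<open>auto simp: pfam_def\<close>)
    then have 1: "h \<midarrow>0\<rightarrow> h 0" by (simp add: isCont_def)
    have "(\<lambda>t. p i) \<midarrow>0\<rightarrow> p i" by simp
    then have 2: "h \<midarrow>0\<rightarrow> p i" using LIM_equal[of 0 h "\<lambda>t. p i" "p i"] assms(2) True
      by (auto simp: h aff_id_def)
    from LIM_unique[OF 1 2] show ?thesis using h True by (simp add: aff_id_def)
  qed
qed

definition fam :: "nat \<Rightarrow> ((nat \<Rightarrow> complex) \<Rightarrow> (nat \<Rightarrow> complex)) set \<Rightarrow> (complex \<Rightarrow> (nat \<Rightarrow> complex) \<Rightarrow> (nat \<Rightarrow> complex)) set" where
  "fam n S = {\<Phi>. pfam n \<Phi> \<and> (\<exists>\<Psi>. pfam n \<Psi> \<and> (\<forall>t. t \<noteq> 0 \<longrightarrow> \<Psi> t \<circ> \<Phi> t = aff_id n \<and> \<Phi> t \<circ> \<Psi> t = aff_id n))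
     \<and> (\<forall>t. t \<noteq> 0 \<longrightarrow> \<Phi> t \<in> S)}"

definition lim0 :: "nat \<Rightarrow> ((nat \<Rightarrow> complex) \<Rightarrow> (nat \<Rightarrow> complex)) set \<Rightarrow> ((nat \<Rightarrow> complex) \<Rightarrow> (nat \<Rightarrow> complex)) set" where
  "lim0 n S = (\<lambda>\<Phi>. \<Phi> 0) ` fam n S"

lemma inv_all:
  assumes "pfam n \<Phi>" "pfam n \<Psi>" "\<forall>t. t \<noteq> 0 \<longrightarrow> \<Psi> t \<circ> \<Phi> t = aff_id n \<and> \<Phi> t \<circ> \<Psi> t = aff_id n"
  shows "\<Psi> t \<circ> \<Phi> t = aff_id n \<and> \<Phi> t \<circ> \<Psi> t = aff_id n"
proof (cases "t = 0")
  case True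
  have "(\<lambda>t. \<Psi> t \<circ> \<Phi> t) 0 = aff_id n" by (rule lim_id[OF pfam_comp[OF assms(2,1)]]) (use assms(3) in auto)
  moreover have "(\<lambda>t. \<Phi> t \<circ> \<Psi> t) 0 = aff_id n" by (rule lim_id[OF pfam_comp[OF assms(1,2)]]) (use assms(3) in auto)
  ultimately show ?thesis using True by simp
qed (use assms in auto)

lemma pfam_aut: "pfam n \<Phi> \<Longrightarrow> pfam n \<Psi> \<Longrightarrow> \<Psi> t \<circ> \<Phi> t = aff_id n \<Longrightarrow> \<Phi> t \<circ> \<Psi> t = aff_id n \<Longrightarrow> \<Phi> t \<in> aut n"
  unfolding aut_def pfam_def by auto

lemma fam_witness:
  assumes "\<Phi> \<in> fam n S" "subgroup S (aut_group n)"
  shows "\<exists>\<Psi> \<in> fam n S. (\<forall>t. inv\<^bsub>aut_group n\<^esub> (\<Phi> t) = \<Psi> t \<and> \<Phi> t \<in> aut n \<and> \<Psi> t \<in> aut n)"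
proof -
  obtain \<Psi> where P: "pfam n \<Phi>" "pfam n \<Psi>" "\<forall>t. t \<noteq> 0 \<longrightarrow> \<Psi> t \<circ> \<Phi> t = aff_id n \<and> \<Phi> t \<circ> \<Psi> t = aff_id n"
    and S: "\<forall>t. t \<noteq> 0 \<longrightarrow> \<Phi> t \<in> S" using assms(1) by (auto simp: fam_def)
  have I: "\<Psi> t \<circ> \<Phi> t = aff_id n \<and> \<Phi> t \<circ> \<Psi> t = aff_id n" for t using inv_all[OF P] .
  have A: "\<Phi> t \<in> aut n" "\<Psi> t \<in> aut n" for t using pfam_aut[OF P(1,2)] pfam_aut[OF P(2,1)] I by auto
  have inv: "inv\<^bsub>aut_group n\<^esub> (\<Phi> t) = \<Psi> t" for t
    using aut_inv[OF A(1)] I P(2) by (auto simp: pfam_def)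
  have "\<Psi> t \<in> S" if "t \<noteq> 0" for t
    using inv[of t] subgroup.m_inv_closed[OF assms(2), of "\<Phi> t"] S that by simp
  then have "\<Psi> \<in> fam n S" unfolding fam_def
    using P I by blast
  then show ?thesis using inv A by blast
qed

lemma fam_comp:
  assumes "\<Phi> \<in> fam n S" "\<Phi>' \<in> fam n S" "subgroup S (aut_group n)"
  shows "(\<lambda>t. \<Phi> t \<circ> \<Phi>' t) \<in> fam n S"
proof -
  obtain \<Psi> where P: "pfam n \<Phi>" "pfam n \<Psi>" "\<forall>t. t \<noteq> 0 \<longrightarrow> \<Psi> t \<circ> \<Phi> t = aff_id n \<and> \<Phi> t \<circ> \<Psi> t = aff_id n"
    and S: "\<forall>t. t \<noteq> 0 \<longrightarrow> \<Phi> t \<in> S" using assms(1) by (auto simp: fam_def)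
  obtain \<Psi>' where P': "pfam n \<Phi>'" "pfam n \<Psi>'" "\<forall>t. t \<noteq> 0 \<longrightarrow> \<Psi>' t \<circ> \<Phi>' t = aff_id n \<and> \<Phi>' t \<circ> \<Psi>' t = aff_id n"
    and S': "\<forall>t. t \<noteq> 0 \<longrightarrow> \<Phi>' t \<in> S" using assms(2) by (auto simp: fam_def)
  have pm: "\<Phi> t \<in> poly_map n" "\<Psi> t \<in> poly_map n" "\<Phi>' t \<in> poly_map n" "\<Psi>' t \<in> poly_map n" for t
    using P P' by (auto simp: pfam_def)
  have "(\<Psi>' t \<circ> \<Psi> t) \<circ> (\<Phi> t \<circ> \<Phi>' t) = aff_id n \<and> (\<Phi> t \<circ> \<Phi>' t) \<circ> (\<Psi>' t \<circ> \<Psi> t) = aff_id n"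
    if "t \<noteq> 0" for t
  proof -
    have "(\<Psi>' t \<circ> \<Psi> t) \<circ> (\<Phi> t \<circ> \<Phi>' t) = \<Psi>' t \<circ> (\<Psi> t \<circ> \<Phi> t) \<circ> \<Phi>' t" by (simp add: comp_assoc)
    also have "\<dots> = aff_id n" using P P' that pm by (simp add: pm_id_right)
    finally have 1: "(\<Psi>' t \<circ> \<Psi> t) \<circ> (\<Phi> t \<circ> \<Phi>' t) = aff_id n" .
    have "(\<Phi> t \<circ> \<Phi>' t) \<circ> (\<Psi>' t \<circ> \<Psi> t) = \<Phi> t \<circ> (\<Phi>' t \<circ> \<Psi>' t) \<circ> \<Psi> t" by (simp add: comp_assoc)
    also have "\<dots> = aff_id n" using P P' that pm by (simp add: pm_id_right)
    finally show ?thesis using 1 by simp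
  qed
  moreover have "\<Phi> t \<circ> \<Phi>' t \<in> S" if "t \<noteq> 0" for t
    using subgroup.m_closed[OF assms(3), of "\<Phi> t" "\<Phi>' t"] S S' that by simp
  ultimately show ?thesis unfolding fam_def using P P' pfam_comp[OF P(1) P'(1)] pfam_comp[OF P'(2) P(2)]
    by blast
qed

lemma fam_const:
  assumes "F \<in> S" "subgroup S (aut_group n)"
  shows "(\<lambda>t. F) \<in> fam n S"
proof -
  have F: "F \<in> aut n" using subgroup.subset[OF assms(2)] assms(1) by auto
  then obtain G where "G \<in> poly_map n" "G \<circ> F = aff_id n" "F \<circ> G = aff_id n" "F \<in> poly_map n" by (auto simp: aut_def)
  then show ?thesis unfolding fam_def using assms(1) by (auto intro!: pfam_const exI[of _ "\<lambda>t. G"])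
qed

lemma lim0_subgroup:
  assumes "subgroup S (aut_group n)" shows "subgroup (lim0 n S) (aut_group n)"
proof (rule group.subgroupI[OF group_aut])
  show "lim0 n S \<subseteq> carrier (aut_group n)"
    using fam_witness[OF _ assms] by (auto simp: lim0_def)
  show "lim0 n S \<noteq> {}" using fam_const[OF subgroup.one_closed[OF assms] assms] by (auto simp: lim0_def)
  fix a assume "a \<in> lim0 n S"
  then obtain \<Phi> where "\<Phi> \<in> fam n S" "a = \<Phi> 0" by (auto simp: lim0_def)
  then show "inv\<^bsub>aut_group n\<^esub> a \<in> lim0 n S" using fam_witness[OF _ assms] unfolding lim0_def
    by (metis image_eqI)
next
  fix a b assume "a \<in> lim0 n S" "b \<in> lim0 n S"
  then obtain \<Phi> \<Phi>' where "\<Phi> \<in> fam n S" "a = \<Phi> 0" "\<Phi>' \<in> fam n S" "b = \<Phi>' 0" by (auto simp: lim0_def)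
  then show "a \<otimes>\<^bsub>aut_group n\<^esub> b \<in> lim0 n S"
    using fam_comp[OF _ _ assms, of \<Phi> \<Phi>'] unfolding lim0_def by (auto intro!: image_eqI[of _ _ "\<lambda>t. \<Phi> t \<circ> \<Phi>' t"])
qed

lemma lim0_incl: "subgroup S (aut_group n) \<Longrightarrow> S \<subseteq> lim0 n S"
proof
  fix x assume "subgroup S (aut_group n)" "x \<in> S"
  then have "(\<lambda>t. x) \<in> fam n S" by (rule fam_const[rotated])
  then show "x \<in> lim0 n S" unfolding lim0_def by (rule image_eqI[rotated]) simp
qed

lemma lim0_triv: "lim0 n {aff_id n} \<subseteq> {aff_id n}"
  unfolding lim0_def fam_def using lim_id by auto

lemma fam_change: "\<Phi> \<in> fam n S \<Longrightarrow> (\<forall>t. t \<noteq> 0 \<longrightarrow> \<Phi> t \<in> S') \<Longrightarrow> \<Phi> \<in> fam n S'"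
  unfolding fam_def by auto

lemma lim0_derived:
  assumes "subgroup S (aut_group n)"
  shows "derived (aut_group n) (lim0 n S) \<subseteq> lim0 n (derived (aut_group n) S)"
proof -
  let ?G = "aut_group n"
  have sd: "subgroup (derived ?G S) ?G"
    using group.derived_is_subgroup[OF group_aut subgroup.subset[OF assms]] .
  have "derived_set ?G (lim0 n S) \<subseteq> lim0 n (derived ?G S)"
  proof
    fix x assume "x \<in> derived_set ?G (lim0 n S)"
    then obtain \<Phi> \<Phi>' where F: "\<Phi> \<in> fam n S" "\<Phi>' \<in> fam n S"
      and x: "x = \<Phi> 0 \<otimes>\<^bsub>?G\<^esub> \<Phi>' 0 \<otimes>\<^bsub>?G\<^esub> inv\<^bsub>?G\<^esub> (\<Phi> 0) \<otimes>\<^bsub>?G\<^esub> inv\<^bsub>?G\<^esub> (\<Phi>' 0)"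
      by (auto simp: lim0_def)
    obtain \<Psi> where W: "\<Psi> \<in> fam n S" "\<forall>t. inv\<^bsub>?G\<^esub> (\<Phi> t) = \<Psi> t" using fam_witness[OF F(1) assms] by auto
    obtain \<Psi>' where W': "\<Psi>' \<in> fam n S" "\<forall>t. inv\<^bsub>?G\<^esub> (\<Phi>' t) = \<Psi>' t" using fam_witness[OF F(2) assms] by auto
    define X where "X t = \<Phi> t \<circ> \<Phi>' t \<circ> \<Psi> t \<circ> \<Psi>' t" for t
    have "X \<in> fam n S" unfolding X_def
      by (intro fam_comp F W W' assms)
    moreover have "X t \<in> derived ?G S" if "t \<noteq> 0" for t
    proof -
      have "\<Phi> t \<in> S" "\<Phi>' t \<in> S" using F that by (auto simp: fam_def)
      then have "\<Phi> t \<otimes>\<^bsub>?G\<^esub> \<Phi>' t \<otimes>\<^bsub>?G\<^esub> inv\<^bsub>?G\<^esub> (\<Phi> t) \<otimes>\<^bsub>?G\<^esub> inv\<^bsub>?G\<^esub> (\<Phi>' t) \<in> derived_set ?G S"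
        by blast
      then have "X t \<in> derived_set ?G S" using W W' unfolding X_def by simp
      then show ?thesis unfolding derived_def by (rule generate.incl)
    qed
    ultimately have "X \<in> fam n (derived ?G S)" using fam_change by blast
    moreover have "x = X 0" using x W W' by (simp add: X_def)
    ultimately show "x \<in> lim0 n (derived ?G S)" by (auto simp: lim0_def)
  qed
  then show ?thesis unfolding derived_def[of _ "lim0 n S"]
    by (rule group.generate_subgroup_incl[OF group_aut _ lim0_subgroup[OF sd]])
qed

lemma lim0_derived_pow:
  assumes "subgroup S (aut_group n)"
  shows "(derived (aut_group n) ^^ m) (lim0 n S) \<subseteq> lim0 n ((derived (aut_group n) ^^ m) S)"
proof (induction m)
  case 0 then show ?case by simp
next
  case (Suc m)
  have sm: "subgroup ((derived (aut_group n) ^^ m) S) (aut_group n)"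
    using group.exp_of_derived_is_subgroup[OF group_aut assms] .
  have "(derived (aut_group n) ^^ Suc m) (lim0 n S) \<subseteq> derived (aut_group n) (lim0 n ((derived (aut_group n) ^^ m) S))"
    using group.mono_derived[OF group_aut Suc.IH] by simp
  also have "\<dots> \<subseteq> lim0 n ((derived (aut_group n) ^^ Suc m) S)"
    using lim0_derived[OF sm] by simp
  finally show ?case .
qed

definition ek :: "nat \<Rightarrow> nat \<Rightarrow> complex" where "ek k = (\<lambda>m. if m = k then 1 else 0)"

definition Dc :: "((nat \<Rightarrow> complex) \<Rightarrow> complex) \<Rightarrow> (nat \<Rightarrow> complex) \<Rightarrow> nat \<Rightarrow> complex" where
  "Dc f a k = deriv (\<lambda>t. f (\<lambda>m. a m + t * ek k m)) 0"

lemma sum_ek: "j < n \<Longrightarrow> (\<Sum>k<n. c k * ek j k) = c j"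
proof -
  assume j: "j < n"
  have "(\<Sum>k<n. c k * ek j k) = (\<Sum>k<n. if k = j then c k else 0)" by (rule sum.cong) (auto simp: ek_def)
  then show ?thesis using j by simp
qed

lemma expand_deriv:
  assumes f: "f \<in> poly_fun n" and f': "f' \<in> poly_fun (Suc n)"
    and e: "\<forall>q. f (\<lambda>k. a k + q n * q k) = f a + q n * f' q" and j: "j < n"
    and x: "\<forall>m. a m = x m + s * ek j m"
  shows "((\<lambda>t. f (\<lambda>m. x m + t * ek j m)) has_field_derivative f' ((ek j)(n := 0))) (at s)"
proof -
  define g where "g z = f' ((ek j)(n := z - s))" for z
  have "f (\<lambda>m. x m + z * ek j m) - f (\<lambda>m. x m + s * ek j m) = g z * (z - s)" for z
  proof -
    let ?q = "(ek j)(n := z - s)"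
    have "f (\<lambda>m. x m + z * ek j m) = f (\<lambda>k. a k + ?q n * ?q k)"
      by (rule pf_local[OF f]) (auto simp: x algebra_simps)
    also have "\<dots> = f a + (z - s) * f' ?q" using e[rule_format, of ?q] by simp
    finally have A: "f (\<lambda>m. x m + z * ek j m) = f a + (z - s) * f' ?q" .
    have B: "f (\<lambda>m. x m + s * ek j m) = f a" using x by (metis)
    show ?thesis by (simp only: A B g_def) (simp add: algebra_simps)
  qed
  moreover have "isCont g s"
  proof -
    have "continuous_on UNIV (\<lambda>z. f' ((ek j)(n := z - s)))"
      by (rule continuous_on_compose2[OF pf_cont[OF f'], of UNIV "\<lambda>z. z - s"]) (auto intro: continuous_intros)
    then show ?thesis unfolding g_def using continuous_on_eq_continuous_at by blast
  qed
  ultimately show ?thesis unfolding CARAT_DERIV by (auto simp: g_def intro!: exI[of _ g])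
qed

lemma pf_expand2:
  assumes "f \<in> poly_fun n"
  shows "\<exists>f'. f' \<in> poly_fun (Suc n) \<and> (\<forall>q. f (\<lambda>k. a k + q n * q k) = f a + q n * f' q)
     \<and> (\<forall>q. q n = 0 \<longrightarrow> f' q = (\<Sum>k<n. Dc f a k * q k))"
proof -
  obtain f' c where f': "f' \<in> poly_fun (Suc n)" "\<forall>q. f (\<lambda>k. a k + q n * q k) = f a + q n * f' q"
    "\<forall>q. q n = 0 \<longrightarrow> f' q = (\<Sum>k<n. c k * q k)" using pf_expand[OF assms] by blast
  have "c k = Dc f a k" if k: "k < n" for k
  proof -
    have "((\<lambda>t. f (\<lambda>m. a m + t * ek k m)) has_field_derivative f' ((ek k)(n := 0))) (at 0)"
      by (rule expand_deriv[OF assms f'(1,2) k]) simp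
    moreover have "f' ((ek k)(n := 0)) = c k"
      using f'(3) k sum_ek[OF k, of c] by (auto simp: ek_def intro: sum.cong)
    ultimately show ?thesis unfolding Dc_def by (metis DERIV_imp_deriv)
  qed
  then have "(\<Sum>k<n. c k * q k) = (\<Sum>k<n. Dc f a k * q k)" for q by (intro sum.cong) auto
  then show ?thesis using f' by (auto intro!: exI[of _ f'])
qed

lemma dir_const:
  assumes f: "f \<in> poly_fun n" and j: "j < n" and D0: "\<forall>a. Dc f a j = 0"
  shows "f (\<lambda>m. x m + t * ek j m) = f x"
proof -
  have "((\<lambda>t. f (\<lambda>m. x m + t * ek j m)) has_field_derivative 0) (at s)" for s
  proof -
    define a where "a m = x m + s * ek j m" for m
    obtain f' where f': "f' \<in> poly_fun (Suc n)" "\<forall>q. f (\<lambda>k. a k + q n * q k) = f a + q n * f' q"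
      "\<forall>q. q n = 0 \<longrightarrow> f' q = (\<Sum>k<n. Dc f a k * q k)" using pf_expand2[OF f] by blast
    have "f' ((ek j)(n := 0)) = (\<Sum>k<n. Dc f a k * ((ek j)(n := 0)) k)" using f'(3) by simp
    also have "\<dots> = (\<Sum>k<n. Dc f a k * ek j k)" by (intro sum.cong) auto
    also have "\<dots> = 0" using sum_ek[OF j] D0 by simp
    finally have "f' ((ek j)(n := 0)) = 0" .
    with expand_deriv[OF f f'(1,2) j, of x s] show ?thesis by (simp add: a_def)
  qed
  then obtain c where "\<forall>y\<in>UNIV. f (\<lambda>m. x m + y * ek j m) = c"
    using has_field_derivative_zero_constant[of UNIV "\<lambda>t. f (\<lambda>m. x m + t * ek j m)"] by auto
  then have c1: "f (\<lambda>m. x m + t * ek j m) = c" and c2: "f (\<lambda>m. x m + 0 * ek j m) = c" by blast+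
  from c2 have "f x = c" by simp
  with c1 show ?thesis by simp
qed

lemma tri_of_D:
  assumes g: "g \<in> aut n" and D0: "\<forall>a i j. j < i \<and> i < n \<longrightarrow> Dc (\<lambda>p. g p i) a j = 0"
  shows "g \<in> jonq n"
  unfolding jonq_def
proof (safe intro!: g)
  fix i and p q :: "nat \<Rightarrow> complex" assume i: "i < n" and pq: "\<forall>j. i \<le> j \<and> j < n \<longrightarrow> p j = q j"
  have gi: "(\<lambda>p. g p i) \<in> poly_fun n" using g i by (auto simp: aut_def poly_map_def)
  define r where "r m = (\<lambda>k. if k < m then q k else p k)" for m
  have "m \<le> i \<Longrightarrow> g (r m) i = g p i" for m
  proof (induction m)
    case 0 then show ?case by (simp add: r_def)
  next
    case (Suc m)
    have "r (Suc m) = (\<lambda>k. r m k + (q m - p m) * ek m k)" by (auto simp: r_def ek_def fun_eq_iff less_Suc_eq)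
    then have "g (r (Suc m)) i = g (r m) i"
      using dir_const[OF gi, of m "r m" "q m - p m"] D0 Suc.prems i by auto
    then show ?case using Suc by simp
  qed
  then have "g (r i) i = g p i" by simp
  moreover have "g (r i) i = g q i" by (rule pf_local[OF gi]) (use pq in \<open>auto simp: r_def\<close>)
  ultimately show "g p i = g q i" by simp
qed

definition scl :: "nat \<Rightarrow> complex \<Rightarrow> (nat \<Rightarrow> complex) \<Rightarrow> (nat \<Rightarrow> complex)" where
  "scl n c = (\<lambda>p i. if i < n then c * p i else 0)"
definition trl :: "nat \<Rightarrow> (nat \<Rightarrow> complex) \<Rightarrow> (nat \<Rightarrow> complex) \<Rightarrow> (nat \<Rightarrow> complex)" where
  "trl n a = (\<lambda>p i. if i < n then p i + a i else 0)"

lemma jonq_intro: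
  assumes "F \<in> poly_map n" "G \<in> poly_map n" "G \<circ> F = aff_id n" "F \<circ> G = aff_id n"
    "\<And>i p q. i < n \<Longrightarrow> (\<forall>j. i \<le> j \<and> j < n \<longrightarrow> p j = q j) \<Longrightarrow> F p i = F q i"
  shows "F \<in> jonq n"
  using assms unfolding jonq_def aut_def by blast

lemma scl_pm: "scl n c \<in> poly_map n"
  unfolding scl_def poly_map_def by (auto intro!: poly_fun.intros)

lemma trl_pm: "trl n a \<in> poly_map n"
  unfolding trl_def poly_map_def by (auto intro!: poly_fun.intros)

lemma scl_jonq: "c \<noteq> 0 \<Longrightarrow> scl n c \<in> jonq n"
  by (rule jonq_intro[OF scl_pm scl_pm[of n "1/c"]]) (auto simp: scl_def aff_id_def fun_eq_iff)

lemma trl_jonq: "trl n a \<in> jonq n"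
  by (rule jonq_intro[OF trl_pm trl_pm[of n "\<lambda>i. - a i"]]) (auto simp: trl_def aff_id_def fun_eq_iff)

definition conjf :: "nat \<Rightarrow> complex \<Rightarrow> ((nat \<Rightarrow> complex) \<Rightarrow> (nat \<Rightarrow> complex)) \<Rightarrow> (nat \<Rightarrow> complex) \<Rightarrow> (nat \<Rightarrow> complex) \<Rightarrow> (nat \<Rightarrow> complex)" where
  "conjf n t g a = scl n (1/t) \<circ> trl n (\<lambda>i. - g a i) \<circ> g \<circ> trl n a \<circ> scl n t"

lemma conj_inv:
  assumes g: "g \<in> poly_map n" and g': "g' \<in> poly_map n" and gg: "g' \<circ> g = aff_id n" and t: "t \<noteq> 0"
    and b: "\<forall>i<n. b i = g a i"
  shows "conjf n t g' b \<circ> conjf n t g a = aff_id n"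
proof
  fix x
  have 1: "trl n b (scl n t (scl n (1/t) (trl n (\<lambda>i. - g a i) z))) = aff_id n z" for z
    using t b by (auto simp: fun_eq_iff scl_def trl_def aff_id_def)
  have 2: "g' (aff_id n w) = g' w" for w by (rule pm_local[OF g']) (simp add: aff_id_def)
  have 3: "g' (g y) = aff_id n y" for y using gg by (metis comp_apply)
  have gb: "g' b = aff_id n a"
  proof -
    have "g' b = g' (g a)" by (rule pm_local[OF g']) (use b in auto)
    then show ?thesis using 3 by simp
  qed
  have 4: "trl n (\<lambda>i. - g' b i) (aff_id n (trl n a (scl n t x))) = scl n t x"
    using gb by (auto simp: fun_eq_iff scl_def trl_def aff_id_def)
  have 5: "scl n (1/t) (scl n t x) = aff_id n x" using t by (auto simp: fun_eq_iff scl_def aff_id_def)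
  show "(conjf n t g' b \<circ> conjf n t g a) x = aff_id n x"
    unfolding conjf_def comp_def by (simp only: 1 2 3 4 5)
qed

definition expF :: "nat \<Rightarrow> ((nat \<Rightarrow> complex) \<Rightarrow> (nat \<Rightarrow> complex)) \<Rightarrow> (nat \<Rightarrow> complex) \<Rightarrow> nat \<Rightarrow> (nat \<Rightarrow> complex) \<Rightarrow> complex" where
  "expF n h a i = (SOME f'. f' \<in> poly_fun (Suc n) \<and> (\<forall>q. h (\<lambda>k. a k + q n * q k) i = h a i + q n * f' q)
     \<and> (\<forall>q. q n = 0 \<longrightarrow> f' q = (\<Sum>k<n. Dc (\<lambda>p. h p i) a k * q k)))"

lemma expF:
  assumes "h \<in> poly_map n" "i < n"
  shows "expF n h a i \<in> poly_fun (Suc n) \<and> (\<forall>q. h (\<lambda>k. a k + q n * q k) i = h a i + q n * expF n h a i q)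
     \<and> (\<forall>q. q n = 0 \<longrightarrow> expF n h a i q = (\<Sum>k<n. Dc (\<lambda>p. h p i) a k * q k))"
proof -
  have "(\<lambda>p. h p i) \<in> poly_fun n" using assms by (auto simp: poly_map_def)
  from pf_expand2[OF this, of a] show ?thesis unfolding expF_def by (rule someI_ex)
qed

definition famOf :: "nat \<Rightarrow> ((nat \<Rightarrow> complex) \<Rightarrow> (nat \<Rightarrow> complex)) \<Rightarrow> (nat \<Rightarrow> complex) \<Rightarrow> complex \<Rightarrow> (nat \<Rightarrow> complex) \<Rightarrow> (nat \<Rightarrow> complex)" where
  "famOf n h a = (\<lambda>t x i. if i < n then expF n h a i (x(n := t)) else 0)"

lemma famOf_pfam:
  assumes h: "h \<in> poly_map n" shows "pfam n (famOf n h a)"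
  unfolding pfam_def
proof (intro conjI allI impI)
  fix t
  show "famOf n h a t \<in> poly_map n" unfolding poly_map_def
  proof (safe)
    fix i assume i: "i < n"
    define \<sigma> where "\<sigma> k = (if k = n then (\<lambda>x::nat\<Rightarrow>complex. t) else (\<lambda>x. x k))" for k
    have "(\<lambda>x. expF n h a i (\<lambda>k. \<sigma> k x)) \<in> poly_fun n"
      by (rule pf_subst) (use expF[OF h i] in \<open>auto simp: \<sigma>_def intro: poly_fun.intros\<close>)
    moreover have "(\<lambda>k. \<sigma> k x) = x(n := t)" for x by (auto simp: \<sigma>_def)
    ultimately show "(\<lambda>p. famOf n h a t p i) \<in> poly_fun n" using i by (simp add: famOf_def)
  qed (auto simp: famOf_def)
next
  fix i assume i: "i < n"
  show "(\<lambda>p. famOf n h a (p n) p i) \<in> poly_fun (Suc n)" using expF[OF h i] i by (simp add: famOf_def)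
qed

lemma famOf_eq:
  assumes h: "h \<in> poly_map n" and t: "t \<noteq> 0"
  shows "famOf n h a t = conjf n t h a"
proof (intro ext)
  fix x i
  show "famOf n h a t x i = conjf n t h a x i"
  proof (cases "i < n")
    case True
    let ?q = "x(n := t)"
    have "h (trl n a (scl n t x)) = h (\<lambda>k. a k + ?q n * ?q k)"
      by (rule pm_local[OF h]) (auto simp: trl_def scl_def algebra_simps)
    moreover have "h (\<lambda>k. a k + ?q n * ?q k) i = h a i + ?q n * expF n h a i ?q"
      using expF[OF h True, of a] by blast
    ultimately have "h (trl n a (scl n t x)) i = h a i + t * expF n h a i ?q" by simp
    then show ?thesis using True t by (simp add: famOf_def conjf_def scl_def trl_def field_simps)
  qed (simp add: famOf_def conjf_def scl_def)
qed

lemma famOf_zero: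
  assumes h: "h \<in> poly_map n"
  shows "famOf n h a 0 = (\<lambda>x i. if i < n then (\<Sum>k<n. Dc (\<lambda>p. h p i) a k * x k) else 0)"
proof (intro ext)
  fix x i
  show "famOf n h a 0 x i = (if i < n then (\<Sum>k<n. Dc (\<lambda>p. h p i) a k * x k) else 0)"
  proof (cases "i < n")
    case True
    have "expF n h a i (x(n := 0)) = (\<Sum>k<n. Dc (\<lambda>p. h p i) a k * (x(n := 0)) k)" using expF[OF h True] by simp
    also have "\<dots> = (\<Sum>k<n. Dc (\<lambda>p. h p i) a k * x k)" by (intro sum.cong) auto
    finally show ?thesis using True by (simp add: famOf_def)
  qed (simp add: famOf_def)
qed

lemma lim_lin:
  assumes H: "subgroup H (aut_group n)" and J: "jonq n \<subseteq> H" and g: "g \<in> H"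
  shows "famOf n g a 0 \<in> lim0 n H"
proof -
  let ?G = "aut_group n"
  have gA: "g \<in> aut n" using subgroup.subset[OF H] g by auto
  obtain g' where g': "g' \<in> poly_map n" "g' \<circ> g = aff_id n" "g \<circ> g' = aff_id n" using gA by (auto simp: aut_def)
  have gp: "g \<in> poly_map n" using gA by (simp add: aut_def)
  define b where "b = g a"
  have i1: "conjf n t g' b \<circ> conjf n t g a = aff_id n" if "t \<noteq> 0" for t
    by (rule conj_inv[OF gp g'(1,2) that]) (simp add: b_def)
  have i2: "conjf n t g a \<circ> conjf n t g' b = aff_id n" if "t \<noteq> 0" for t
  proof -
    have "\<forall>i<n. a i = g' b i" using g'(2) by (auto simp: b_def aff_id_def dest: fun_cong[of _ _ a])
    then show ?thesis by (rule conj_inv[OF g'(1) gp g'(3) that])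
  qed
  have inH: "conjf n t g a \<in> H" if "t \<noteq> 0" for t
  proof -
    have s: "scl n t \<in> H" "scl n (1/t) \<in> H" using J scl_jonq that by auto
    have tr: "trl n a \<in> H" "trl n (\<lambda>i. - g a i) \<in> H" using J trl_jonq by auto
    show ?thesis unfolding conjf_def using s tr g subgroup.m_closed[OF H] by simp
  qed
  have "famOf n g a \<in> fam n H" unfolding fam_def
    using famOf_pfam[OF gp] famOf_pfam[OF g'(1), of b] famOf_eq[OF gp] famOf_eq[OF g'(1)] i1 i2 inH
    by (auto intro!: exI[of _ "famOf n g' b"])
  then show ?thesis by (auto simp: lim0_def)
qed

definition islin :: "((nat \<Rightarrow> complex) \<Rightarrow> (nat \<Rightarrow> complex)) \<Rightarrow> bool" where
  "islin F \<longleftrightarrow> (\<forall>p q c. F (\<lambda>k. p k + c * q k) = (\<lambda>k. F p k + c * F q k))"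

lemma islin_app: "islin F \<Longrightarrow> F (\<lambda>k. p k + c * q k) = (\<lambda>k. F p k + c * F q k)"
  by (simp add: islin_def)

lemma islin_comp: "islin F \<Longrightarrow> islin G \<Longrightarrow> islin (F \<circ> G)"
  unfolding islin_def by simp

lemma islin_zero: "islin F \<Longrightarrow> F (\<lambda>k. 0) = (\<lambda>k. 0)"
proof -
  assume "islin F"
  from islin_app[OF this, of "\<lambda>k. 0" 1 "\<lambda>k. 0"]
  have "F (\<lambda>k. 0 + 1 * 0) = (\<lambda>k. F (\<lambda>k. 0) k + 1 * F (\<lambda>k. 0) k)" by simp
  then have "F (\<lambda>k. 0) = (\<lambda>k. F (\<lambda>k. 0) k + F (\<lambda>k. 0) k)" by simp
  then show ?thesis by (metis (no_types, lifting) add_cancel_right_right fun_eq_iff)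
qed

lemma islin_sum:
  assumes "islin F" "finite A"
  shows "F (\<lambda>k. \<Sum>a\<in>A. l a * y a k) = (\<lambda>k. \<Sum>a\<in>A. l a * F (y a) k)"
  using assms(2)
proof (induction rule: finite_induct)
  case empty then show ?case using islin_zero[OF assms(1)] by simp
next
  case (insert x A)
  have "F (\<lambda>k. \<Sum>a\<in>insert x A. l a * y a k) = F (\<lambda>k. (\<Sum>a\<in>A. l a * y a k) + l x * y x k)"
    using insert by (simp add: add.commute)
  also have "\<dots> = (\<lambda>k. F (\<lambda>k. \<Sum>a\<in>A. l a * y a k) k + l x * F (y x) k)"
    using islin_app[OF assms(1), of "\<lambda>k. \<Sum>a\<in>A. l a * y a k" "l x" "y x"] by simp
  also have "\<dots> = (\<lambda>k. \<Sum>a\<in>insert x A. l a * F (y a) k)" using insert by (simp add: add.commute)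
  finally show ?case .
qed

lemma islin_inv:
  assumes "F \<in> aut n" "islin F"
  shows "islin (inv\<^bsub>aut_group n\<^esub> F)"
proof -
  let ?G = "aut_group n"
  let ?Fi = "inv\<^bsub>?G\<^esub> F"
  have Fi: "?Fi \<in> aut n" using group.inv_closed[OF group_aut, of F n] assms by simp
  have r: "F \<circ> ?Fi = aff_id n" using group.r_inv[OF group_aut, of F n] assms by simp
  have l: "?Fi \<circ> F = aff_id n" using group.l_inv[OF group_aut, of F n] assms by simp
  have Fip: "?Fi \<in> poly_map n" and Fp: "F \<in> poly_map n" using Fi assms by (auto simp: aut_def)
  show ?thesis unfolding islin_def
  proof (intro allI)
    fix p q c
    define v where "v = (\<lambda>k. ?Fi p k + c * ?Fi q k)"
    have "F v = (\<lambda>k. F (?Fi p) k + c * F (?Fi q) k)" using assms(2) unfolding islin_def v_def by blast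
    also have "\<dots> = aff_id n (\<lambda>k. p k + c * q k)" using r by (auto simp: fun_eq_iff aff_id_def dest: fun_cong)
    finally have Fv: "F v = aff_id n (\<lambda>k. p k + c * q k)" .
    have vc: "aff_id n v = v" using Fip by (auto simp: fun_eq_iff aff_id_def v_def poly_map_def)
    have "?Fi (\<lambda>k. p k + c * q k) = ?Fi (aff_id n (\<lambda>k. p k + c * q k))"
      by (rule pm_local[OF Fip]) (simp add: aff_id_def)
    also have "\<dots> = ?Fi (F v)" using Fv by simp
    also have "\<dots> = aff_id n v" using l by (metis comp_apply)
    finally show "?Fi (\<lambda>k. p k + c * q k) = (\<lambda>k. ?Fi p k + c * ?Fi q k)" using vc v_def by simp
  qed
qed

lemma lin_matrix: "islin (\<lambda>x i. if i < n then (\<Sum>k<n. C i k * x k) else 0)"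
  unfolding islin_def by (auto simp: fun_eq_iff sum.distrib sum_distrib_left algebra_simps)

lemma dep:
  assumes "finite A" "card A > j" "\<forall>a\<in>A. \<forall>r\<ge>j. y a r = 0"
  shows "\<exists>l. (\<exists>a\<in>A. l a \<noteq> 0) \<and> (\<forall>r. (\<Sum>a\<in>A. l a * y a r) = (0::complex))"
  using assms
proof (induction j arbitrary: A y)
  case 0
  then obtain a where a: "a \<in> A" by (metis card.empty ex_in_conv less_irrefl)
  show ?case using 0 a by (auto intro!: exI[of _ "\<lambda>x. if x = a then 1 else 0"])
next
  case (Suc j)
  show ?case
  proof (cases "\<forall>a\<in>A. y a j = 0")
    case True
    then have "\<forall>a\<in>A. \<forall>r\<ge>j. y a r = 0" using Suc.prems(3) by (metis Suc_leI le_neq_implies_less)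
    then show ?thesis using Suc.IH[of A y] Suc.prems by auto
  next
    case False
    then obtain b where b: "b \<in> A" "y b j \<noteq> 0" by blast
    define A' where "A' = A - {b}"
    define z where "z a = (\<lambda>r. y a r - (y a j / y b j) * y b r)" for a
    have fA': "finite A'" using Suc.prems(1) by (simp add: A'_def)
    have cA': "card A' > j" using Suc.prems(1,2) b by (simp add: A'_def)
    have zA': "\<forall>a\<in>A'. \<forall>r\<ge>j. z a r = 0"
    proof (intro ballI allI impI)
      fix a r assume a: "a \<in> A'" and r: "j \<le> r"
      show "z a r = 0"
      proof (cases "r = j")
        case True then show ?thesis using b by (simp add: z_def)
      next
        case False
        then have "Suc j \<le> r" using r by simp
        then show ?thesis using Suc.prems(3) a b by (simp add: z_def A'_def)
      qed
    qed
    obtain m where m: "\<exists>a\<in>A'. m a \<noteq> 0" "\<forall>r. (\<Sum>a\<in>A'. m a * z a r) = 0"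
      using Suc.IH[OF fA' cA' zA'] by blast
    define l where "l a = (if a = b then - (\<Sum>a'\<in>A'. m a' * (y a' j / y b j)) else m a)" for a
    have A: "A = insert b A'" using b by (auto simp: A'_def)
    have bA': "b \<notin> A'" by (simp add: A'_def)
    have "(\<Sum>a\<in>A. l a * y a r) = 0" for r
    proof -
      have "(\<Sum>a\<in>A. l a * y a r) = l b * y b r + (\<Sum>a\<in>A'. m a * y a r)"
        using fA' bA' by (simp add: A l_def) (intro sum.cong, auto simp: l_def A'_def)
      also have "(\<Sum>a\<in>A'. m a * y a r) = (\<Sum>a\<in>A'. m a * z a r) + (\<Sum>a\<in>A'. m a * (y a j / y b j)) * y b r"
      proof -
        have t: "m a * z a r = m a * y a r - (m a * (y a j / y b j)) * y b r" for a by (simp add: z_def algebra_simps)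
        have "(\<Sum>a\<in>A'. m a * z a r) = (\<Sum>a\<in>A'. m a * y a r) - (\<Sum>a\<in>A'. m a * (y a j / y b j)) * y b r"
          by (simp only: t sum_subtractf sum_distrib_right)
        then show ?thesis by simp
      qed
      finally show ?thesis using m(2) by (simp add: l_def)
    qed
    moreover have "\<exists>a\<in>A. l a \<noteq> 0" using m(1) by (auto simp: l_def A'_def)
    ultimately show ?thesis by blast
  qed
qed

definition col :: "nat \<Rightarrow> nat \<Rightarrow> (nat \<Rightarrow> complex) \<Rightarrow> (nat \<Rightarrow> complex) \<Rightarrow> (nat \<Rightarrow> complex)" where
  "col n j x = (\<lambda>p k. if k < n then p k + x k * p j else 0)"
definition el :: "nat \<Rightarrow> nat \<Rightarrow> nat \<Rightarrow> complex \<Rightarrow> (nat \<Rightarrow> complex) \<Rightarrow> (nat \<Rightarrow> complex)" where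
  "el n a b s = (\<lambda>p k. if k < n then (if k = a then p a + s * p b else p k) else 0)"
definition dg :: "nat \<Rightarrow> nat \<Rightarrow> complex \<Rightarrow> (nat \<Rightarrow> complex) \<Rightarrow> (nat \<Rightarrow> complex)" where
  "dg n r c = (\<lambda>p k. if k < n then (if k = r then c * p k else p k) else 0)"
definition sh :: "nat \<Rightarrow> nat \<Rightarrow> (nat \<Rightarrow> complex) \<Rightarrow> (nat \<Rightarrow> complex) \<Rightarrow> (nat \<Rightarrow> complex)" where
  "sh n j w = (\<lambda>p k. if k < n then (if k = j then p j + (\<Sum>s<n. w s * p s) else p k) else 0)"

lemma pm_by: "(\<And>i. i < n \<Longrightarrow> (\<lambda>p. F p i) \<in> poly_fun n) \<Longrightarrow> (\<And>p i. n \<le> i \<Longrightarrow> F p i = 0) \<Longrightarrow> F \<in> poly_map n"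
  unfolding poly_map_def by auto

lemma col_pm: "j < n \<Longrightarrow> col n j x \<in> poly_map n"
  by (rule pm_by) (auto simp: col_def intro!: poly_fun.intros)
lemma el_pm: "b < n \<Longrightarrow> el n a b s \<in> poly_map n"
proof (rule pm_by)
  fix i assume "b < n" "i < n" then show "(\<lambda>p. el n a b s p i) \<in> poly_fun n"
    by (cases "i = a") (auto simp: el_def intro!: poly_fun.intros)
qed (auto simp: el_def)
lemma dg_pm: "dg n r c \<in> poly_map n"
proof (rule pm_by)
  fix i assume "i < n" then show "(\<lambda>p. dg n r c p i) \<in> poly_fun n"
    by (cases "i = r") (auto simp: dg_def intro!: poly_fun.intros)
qed (auto simp: dg_def)
lemma sh_pm: "sh n j w \<in> poly_map n"
proof (rule pm_by)
  fix i assume "i < n" then show "(\<lambda>p. sh n j w p i) \<in> poly_fun n"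
    by (cases "i = j") (auto simp: sh_def intro!: poly_fun.intros pf_sum)
qed (auto simp: sh_def)

lemma col_col: "j < n \<Longrightarrow> y j = 0 \<Longrightarrow> col n j x \<circ> col n j y = col n j (\<lambda>k. x k + y k)"
  by (auto simp: col_def fun_eq_iff algebra_simps)

lemma col_inv_id: "j < n \<Longrightarrow> x j = 0 \<Longrightarrow> col n j (\<lambda>k. - x k) \<circ> col n j x = aff_id n"
  by (auto simp: col_def aff_id_def fun_eq_iff algebra_simps)

lemma el_jonq: "a < b \<Longrightarrow> b < n \<Longrightarrow> el n a b s \<in> jonq n"
  by (rule jonq_intro[OF el_pm el_pm[of b n a "- s"]]) (auto simp: el_def aff_id_def fun_eq_iff)

lemma el_inv_id: "a \<noteq> b \<Longrightarrow> b < n \<Longrightarrow> el n a b (- s) \<circ> el n a b s = aff_id n"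
  by (auto simp: el_def aff_id_def fun_eq_iff)

lemma dg_jonq: "c \<noteq> 0 \<Longrightarrow> dg n r c \<in> jonq n"
  by (rule jonq_intro[OF dg_pm dg_pm[of n r "1/c"]]) (auto simp: dg_def aff_id_def fun_eq_iff)

lemma sh_jonq:
  assumes w: "\<forall>s\<le>j. w s = 0" shows "sh n j w \<in> jonq n"
proof (rule jonq_intro[OF sh_pm sh_pm[of n j "\<lambda>s. - w s"]])
  have key: "(\<Sum>s<n. v s * sh n j w' p s) = (\<Sum>s<n. v s * p s)" if "v j = 0" for v w' p
    by (rule sum.cong) (auto simp: sh_def that)
  show "sh n j (\<lambda>s. - w s) \<circ> sh n j w = aff_id n"
    using key[of "\<lambda>s. - w s"] w by (auto simp: fun_eq_iff aff_id_def sh_def sum_negf)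
  show "sh n j w \<circ> sh n j (\<lambda>s. - w s) = aff_id n"
    using key[of w] w by (auto simp: fun_eq_iff aff_id_def sh_def sum_negf)
next
  fix i and p q :: "nat \<Rightarrow> complex" assume i: "i < n" and pq: "\<forall>ja. i \<le> ja \<and> ja < n \<longrightarrow> p ja = q ja"
  show "sh n j w p i = sh n j w q i"
  proof (cases "i = j")
    case True
    have "(\<Sum>s<n. w s * p s) = (\<Sum>s<n. w s * q s)"
    proof (rule sum.cong[OF refl])
      fix s assume "s \<in> {..<n}" then show "w s * p s = w s * q s" using w pq True by (cases "j \<le> s") auto
    qed
    then show ?thesis using True pq i by (simp add: sh_def)
  qed (use pq i in \<open>auto simp: sh_def\<close>)
qed

lemma sh_lin: "islin (sh n j w)"
  unfolding islin_def by (auto simp: fun_eq_iff sh_def sum.distrib sum_distrib_left algebra_simps)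

lemma sum_ek2: "b < i \<Longrightarrow> (\<Sum>a<i. l a * ek a b) = l b"
proof -
  assume b: "b < i"
  have "(\<Sum>a<i. l a * ek a b) = (\<Sum>a<i. if a = b then l a else 0)" by (rule sum.cong) (auto simp: ek_def)
  then show ?thesis using b by simp
qed

lemma step_el:
  assumes K: "subgroup K (aut_group n)" and J: "jonq n \<subseteq> K" and M: "M \<in> K" and lin: "islin M"
    and c: "c \<noteq> 0" and ji: "j < i" and i: "i < n" and Mi: "\<forall>p. M p i = c * p j"
  shows "\<exists>r s. j < r \<and> r < n \<and> s \<noteq> 0 \<and> el n r j s \<in> K"
proof -
  let ?G = "aut_group n"
  let ?Mi = "inv\<^bsub>?G\<^esub> M"
  have MA: "M \<in> aut n" using M subgroup.subset[OF K] by auto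
  have MiK: "?Mi \<in> K" using subgroup.m_inv_closed[OF K M] .
  have MiA: "?Mi \<in> aut n" using MiK subgroup.subset[OF K] by auto
  have linMi: "islin ?Mi" using islin_inv[OF MA lin] .
  have r: "M \<circ> ?Mi = aff_id n" using group.r_inv[OF group_aut, of M n] MA by simp
  have l: "?Mi \<circ> M = aff_id n" using group.l_inv[OF group_aut, of M n] MA by simp
  have Mp: "M \<in> poly_map n" and Mip: "?Mi \<in> poly_map n" using MA MiA by (auto simp: aut_def)
  define y where "y a = ?Mi (ek a)" for a
  have Myy: "M (y a) = ek a" if "a < n" for a
  proof -
    have "M (y a) = aff_id n (ek a)" using r unfolding y_def by (metis comp_apply)
    then show ?thesis using that by (auto simp: aff_id_def ek_def fun_eq_iff)
  qed
  have yj: "y a j = 0" if "a < n" "a \<noteq> i" for a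
    using Myy[OF that(1)] Mi[rule_format, of "y a"] that c by (auto simp: ek_def dest: fun_cong[of _ _ i])
  have ycan: "y a k = 0" if "n \<le> k" for a k using Mip that by (auto simp: y_def poly_map_def)
  have "\<exists>a<i. \<exists>r. j < r \<and> r < n \<and> y a r \<noteq> 0"
  proof (rule ccontr)
    assume "\<not> ?thesis"
    then have z: "\<forall>a\<in>{..<i}. \<forall>r\<ge>j. y a r = 0" using yj ycan i
      by (metis lessThan_iff le_neq_implies_less less_irrefl less_trans not_le)
    obtain lam where lam: "\<exists>a\<in>{..<i}. lam a \<noteq> 0" "\<forall>r. (\<Sum>a\<in>{..<i}. lam a * y a r) = 0"
      using dep[OF _ _ z] ji by auto
    then obtain b where b: "b < i" "lam b \<noteq> 0" by auto
    have "M (\<lambda>k. \<Sum>a\<in>{..<i}. lam a * y a k) = (\<lambda>k. \<Sum>a\<in>{..<i}. lam a * M (y a) k)"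
      using islin_sum[OF lin] by blast
    also have "\<dots> = (\<lambda>k. \<Sum>a<i. lam a * ek a k)"
      using Myy i by (intro ext sum.cong) auto
    finally have "M (\<lambda>k. 0) = (\<lambda>k. \<Sum>a<i. lam a * ek a k)" using lam(2) by simp
    then have "(\<lambda>k. 0) = (\<lambda>k. \<Sum>a<i. lam a * ek a k)" using islin_zero[OF lin] by simp
    then have "0 = (\<Sum>a<i. lam a * ek a b)" by (metis)
    then show False using sum_ek2[OF b(1)] b by simp
  qed
  then obtain a r where ar: "a < i" "j < r" "r < n" "y a r \<noteq> 0" by blast
  define x where "x k = c * y a k" for k
  have xj: "x j = 0" using yj[of a] ar i by (simp add: x_def)
  have xr: "x r \<noteq> 0" using ar c by (simp add: x_def)
  have jn: "j < n" using ji i by simp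
  have u: "el n a i 1 \<in> K" using el_jonq[OF ar(1) i] J by auto
  have NK: "?Mi \<circ> el n a i 1 \<circ> M \<in> K"
    using subgroup.m_closed[OF K] MiK u M by simp
  have N: "?Mi \<circ> el n a i 1 \<circ> M = col n j x"
  proof (intro ext)
    fix p k
    have "el n a i 1 (M p) = (\<lambda>k. M p k + (c * p j) * ek a k)"
      using Mp Mi ar i by (auto simp: el_def ek_def fun_eq_iff poly_map_def)
    then have "?Mi (el n a i 1 (M p)) = (\<lambda>k. ?Mi (M p) k + (c * p j) * y a k)"
      using islin_app[OF linMi, of "M p" "c * p j" "ek a"] by (simp add: y_def)
    also have "\<dots> = (\<lambda>k. aff_id n p k + (c * p j) * y a k)" using l by (metis comp_apply)
    finally show "(?Mi \<circ> el n a i 1 \<circ> M) p k = col n j x p k"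
      using ycan by (auto simp: col_def aff_id_def x_def)
  qed
  define x' where "x' = x(r := x r / 2)"
  have x'j: "x' j = 0" using xj ar by (simp add: x'_def)
  have d1: "dg n r (1/2) \<in> K" and d2: "dg n r 2 \<in> K" using J dg_jonq[of "1/2" n r] dg_jonq[of 2 n r] by auto
  have cK: "col n j x \<in> K" using NK N by simp
  have "dg n r (1/2) \<circ> col n j x \<in> K" using subgroup.m_closed[OF K d1 cK] by simp
  then have N'K: "dg n r (1/2) \<circ> col n j x \<circ> dg n r 2 \<in> K" using subgroup.m_closed[OF K _ d2] by simp
  have N': "dg n r (1/2) \<circ> col n j x \<circ> dg n r 2 = col n j x'"
    using ar jn by (auto simp: dg_def col_def x'_def fun_eq_iff)
  have x'A: "col n j x' \<in> aut n" using N'K N' subgroup.subset[OF K] by auto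
  have invN': "inv\<^bsub>?G\<^esub> (col n j x') = col n j (\<lambda>k. - x' k)"
    by (rule aut_inv[OF x'A col_pm[OF jn] col_inv_id[of j n x', OF jn x'j]])
  have "col n j x \<circ> inv\<^bsub>?G\<^esub> (col n j x') \<in> K"
    using subgroup.m_closed[OF K] subgroup.m_inv_closed[OF K] NK N N'K N' by simp
  moreover have "col n j x \<circ> inv\<^bsub>?G\<^esub> (col n j x') = el n r j (x r / 2)"
    unfolding invN' using ar jn xj by (auto simp: col_def el_def x'_def fun_eq_iff)
  ultimately show ?thesis using ar xr by (intro exI[of _ r] exI[of _ "x r / 2"]) auto
qed

lemma el_at: "el n a b s p k = (if k < n then (if k = a then p a + s * p b else p k) else 0)"
  by (simp add: el_def)
lemma dg_at: "dg n a c p k = (if k < n then (if k = a then c * p k else p k) else 0)"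
  by (simp add: dg_def)

lemma hdg_id:
  assumes "j < r" "r < n"
  shows "el n j r 2 \<circ> el n r j (-1/2) \<circ> el n j r 2 \<circ> el n j r (-1) \<circ> el n r j 1 \<circ> el n j r (-1) = dg n j 2 \<circ> dg n r (1/2)"
proof (intro ext)
  fix p k
  have jr: "j \<noteq> r" "r \<noteq> j" "j < n" using assms by auto
  show "(el n j r 2 \<circ> el n r j (-1/2) \<circ> el n j r 2 \<circ> el n j r (-1) \<circ> el n r j 1 \<circ> el n j r (-1)) p k = (dg n j 2 \<circ> dg n r (1/2)) p k"
    using assms jr by (simp add: el_at dg_at; auto simp: field_simps)
qed

lemma commU:
  assumes "j < r" "r < n"
  shows "(dg n j 2 \<circ> dg n r (1/2)) \<circ> el n j r s \<circ> (dg n j (1/2) \<circ> dg n r 2) \<circ> el n j r (- s) = el n j r (3 * s)"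
proof (intro ext)
  fix p k
  have jr: "j \<noteq> r" "r \<noteq> j" "j < n" using assms by auto
  show "((dg n j 2 \<circ> dg n r (1/2)) \<circ> el n j r s \<circ> (dg n j (1/2) \<circ> dg n r 2) \<circ> el n j r (- s)) p k = el n j r (3 * s) p k"
    using assms jr by (simp add: el_at dg_at; auto simp: field_simps)
qed

lemma commV:
  assumes "j < r" "r < n"
  shows "(dg n j 2 \<circ> dg n r (1/2)) \<circ> el n r j s \<circ> (dg n j (1/2) \<circ> dg n r 2) \<circ> el n r j (- s) = el n r j (- 3 * s / 4)"
proof (intro ext)
  fix p k
  have jr: "j \<noteq> r" "r \<noteq> j" "j < n" using assms by auto
  show "((dg n j 2 \<circ> dg n r (1/2)) \<circ> el n r j s \<circ> (dg n j (1/2) \<circ> dg n r 2) \<circ> el n r j (- s)) p k = el n r j (- 3 * s / 4) p k"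
    using assms jr by (simp add: el_at dg_at; auto simp: field_simps)
qed

lemma scale_id:
  assumes "j \<noteq> r" "j < n" "\<mu> \<noteq> 0"
  shows "dg n r (1/\<mu>) \<circ> el n r j s \<circ> dg n r \<mu> = el n r j (s/\<mu>)"
proof (intro ext)
  fix p k
  show "(dg n r (1/\<mu>) \<circ> el n r j s \<circ> dg n r \<mu>) p k = el n r j (s/\<mu>) p k"
    using assms by (simp add: el_at dg_at; auto simp: field_simps)
qed

lemma dg_inv2:
  assumes "j \<noteq> r"
  shows "(dg n j (1/2) \<circ> dg n r 2) \<circ> (dg n j 2 \<circ> dg n r (1/2)) = aff_id n"
  using assms by (auto simp: dg_def aff_id_def fun_eq_iff)

lemma el_scale:
  assumes K: "subgroup K (aut_group n)" and J: "jonq n \<subseteq> K" and e: "el n r j s \<in> K"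
    and s: "s \<noteq> 0" and t: "t \<noteq> 0" and jr: "j \<noteq> r" and jn: "j < n"
  shows "el n r j t \<in> K"
proof -
  define \<mu> where "\<mu> = s / t"
  have mu: "\<mu> \<noteq> 0" using s t by (simp add: \<mu>_def)
  have d1: "dg n r (1/\<mu>) \<in> K" and d2: "dg n r \<mu> \<in> K" using J dg_jonq[of "1/\<mu>" n r] dg_jonq[of \<mu> n r] mu by auto
  have "dg n r (1/\<mu>) \<circ> el n r j s \<in> K" using subgroup.m_closed[OF K d1 e] by simp
  then have "dg n r (1/\<mu>) \<circ> el n r j s \<circ> dg n r \<mu> \<in> K" using subgroup.m_closed[OF K _ d2] by simp
  moreover have "s / \<mu> = t" using s t by (simp add: \<mu>_def)
  ultimately show ?thesis using scale_id[OF jr jn mu] by simp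
qed

lemma sl2:
  assumes K: "subgroup K (aut_group n)" and J: "jonq n \<subseteq> K" and jr: "j < r" "r < n"
    and E: "\<forall>t. t \<noteq> 0 \<longrightarrow> el n r j t \<in> K"
  shows "\<forall>t. t \<noteq> 0 \<longrightarrow> el n j r t \<in> (derived (aut_group n) ^^ m) K \<and> el n r j t \<in> (derived (aut_group n) ^^ m) K"
proof (induction m)
  case 0 then show ?case using E J el_jonq[OF jr] by auto
next
  case (Suc m)
  let ?G = "aut_group n"
  let ?X = "(derived ?G ^^ m) K"
  have X: "subgroup ?X ?G" using group.exp_of_derived_is_subgroup[OF group_aut K] .
  have XA: "?X \<subseteq> aut n" using subgroup.subset[OF X] by simp
  have jn: "j < n" and jr': "j \<noteq> r" "r \<noteq> j" using jr by auto
  define h where "h = dg n j 2 \<circ> dg n r (1/2)"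
  have "el n j r 2 \<circ> el n r j (-1/2) \<circ> el n j r 2 \<circ> el n j r (-1) \<circ> el n r j 1 \<circ> el n j r (-1) \<in> ?X"
    using Suc.IH subgroup.m_closed[OF X] by simp
  then have hX: "h \<in> ?X" using hdg_id[OF jr] by (simp add: h_def)
  have hA: "h \<in> aut n" using hX XA by auto
  have hinv: "inv\<^bsub>?G\<^esub> h = dg n j (1/2) \<circ> dg n r 2"
    by (rule aut_inv[OF hA pm_comp[OF dg_pm dg_pm]]) (use dg_inv2[OF jr'(1)] in \<open>simp add: h_def\<close>)
  have Uinv: "inv\<^bsub>?G\<^esub> (el n j r s) = el n j r (- s)" if "s \<noteq> 0" for s
  proof -
    have "el n j r s \<in> aut n" using Suc.IH that XA by auto
    then show ?thesis by (rule aut_inv[OF _ el_pm el_inv_id]) (use jr in auto)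
  qed
  have Vinv: "inv\<^bsub>?G\<^esub> (el n r j s) = el n r j (- s)" if "s \<noteq> 0" for s
  proof -
    have "el n r j s \<in> aut n" using Suc.IH that XA by auto
    then show ?thesis by (rule aut_inv[OF _ el_pm el_inv_id]) (use jr in auto)
  qed
  show ?case
  proof (intro allI impI conjI)
    fix t :: complex assume t: "t \<noteq> 0"
    have s1: "t / 3 \<noteq> 0" using t by simp
    have "h \<otimes>\<^bsub>?G\<^esub> el n j r (t/3) \<otimes>\<^bsub>?G\<^esub> inv\<^bsub>?G\<^esub> h \<otimes>\<^bsub>?G\<^esub> inv\<^bsub>?G\<^esub> (el n j r (t/3)) \<in> derived_set ?G ?X"
      using hX Suc.IH s1 by blast
    moreover have "h \<otimes>\<^bsub>?G\<^esub> el n j r (t/3) \<otimes>\<^bsub>?G\<^esub> inv\<^bsub>?G\<^esub> h \<otimes>\<^bsub>?G\<^esub> inv\<^bsub>?G\<^esub> (el n j r (t/3)) = el n j r t"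
      using commU[OF jr, of "t/3"] unfolding hinv Uinv[OF s1] by (simp add: h_def)
    ultimately have "el n j r t \<in> derived_set ?G ?X" by simp
    then have "el n j r t \<in> derived ?G ?X" unfolding derived_def by (rule generate.incl)
    then show "el n j r t \<in> (derived ?G ^^ Suc m) K" by simp
    have s2: "- 4 * t / 3 \<noteq> 0" using t by simp
    have "h \<otimes>\<^bsub>?G\<^esub> el n r j (- 4 * t / 3) \<otimes>\<^bsub>?G\<^esub> inv\<^bsub>?G\<^esub> h \<otimes>\<^bsub>?G\<^esub> inv\<^bsub>?G\<^esub> (el n r j (- 4 * t / 3)) \<in> derived_set ?G ?X"
      using hX Suc.IH s2 by blast
    moreover have "- 3 * (- 4 * t / 3) / 4 = t" by simp
    moreover have "h \<otimes>\<^bsub>?G\<^esub> el n r j (- 4 * t / 3) \<otimes>\<^bsub>?G\<^esub> inv\<^bsub>?G\<^esub> h \<otimes>\<^bsub>?G\<^esub> inv\<^bsub>?G\<^esub> (el n r j (- 4 * t / 3)) = el n r j (- 3 * (- 4 * t / 3) / 4)"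
      using commV[OF jr, of "- 4 * t / 3"] unfolding hinv Vinv[OF s2] by (simp add: h_def)
    ultimately have "el n r j t \<in> derived_set ?G ?X" by simp
    then have "el n r j t \<in> derived ?G ?X" unfolding derived_def by (rule generate.incl)
    then show "el n r j t \<in> (derived ?G ^^ Suc m) K" by simp
  qed
qed

lemma derived_H:
  assumes H: "subgroup H (aut_group n)" and sol: "solvable ((aut_group n) \<lparr>carrier := H\<rparr>)"
  shows "\<exists>k. (derived (aut_group n) ^^ k) H = {aff_id n}"
proof -
  let ?G = "aut_group n"
  let ?Hs = "?G\<lparr>carrier := H\<rparr>"
  have grp: "group ?Hs" using group.subgroup_imp_group[OF group_aut H] .
  obtain k where k: "(derived ?Hs ^^ k) (carrier ?Hs) = {\<one>\<^bsub>?Hs\<^esub>}"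
    using group.solvable_imp_trivial_derived_seq[OF grp] sol unfolding solvable_def by blast
  have sub: "(derived ?G ^^ m) H \<subseteq> H" for m
  proof (induction m)
    case (Suc m) then show ?case using group.derived_incl[OF group_aut Suc.IH H] by simp
  qed simp
  have "(derived ?Hs ^^ m) H = (derived ?G ^^ m) H" for m
  proof (induction m)
    case (Suc m) then show ?case using group.derived_consistent[OF group_aut sub[of m] H] by simp
  qed simp
  then show ?thesis using k by auto
qed

lemma M_row:
  assumes j0: "j0 < n" and Cz: "\<forall>k<j0. C k = 0" and Cj: "C j0 \<noteq> 0"
  shows "(\<Sum>k<n. C k * sh n j0 (\<lambda>s. if j0 < s then - C s / C j0 else 0) p k) = C j0 * p j0"
proof -
  define w where "w = (\<lambda>s. if j0 < s then - C s / C j0 else 0)"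
  have "(\<Sum>k<n. C k * sh n j0 w p k) = (\<Sum>k<n. C k * p k + (if k = j0 then C j0 * (\<Sum>s<n. w s * p s) else 0))"
    by (rule sum.cong) (auto simp: sh_def algebra_simps)
  also have "\<dots> = (\<Sum>k<n. C k * p k) + C j0 * (\<Sum>s<n. w s * p s)"
    using j0 by (simp add: sum.distrib)
  also have "\<dots> = (\<Sum>k<n. (C k + C j0 * w k) * p k)"
    by (simp add: sum.distrib sum_distrib_left algebra_simps)
  also have "\<dots> = (\<Sum>k<n. if k = j0 then C j0 * p k else 0)"
  proof (rule sum.cong[OF refl])
    fix k assume "k \<in> {..<n}"
    show "(C k + C j0 * w k) * p k = (if k = j0 then C j0 * p k else 0)"
    proof (cases k j0 rule: linorder_cases)
      case less then show ?thesis using Cz by (simp add: w_def)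
    next
      case equal then show ?thesis by (simp add: w_def)
    next
      case greater then show ?thesis using Cj by (simp add: w_def field_simps)
    qed
  qed
  also have "\<dots> = C j0 * p j0" using j0 by simp
  finally show ?thesis by (simp only: w_def)
qed

theorem proposition3p4:
  fixes n :: nat and H :: "((nat \<Rightarrow> complex) \<Rightarrow> (nat \<Rightarrow> complex)) set"
  assumes "n \<ge> 2"
    and "subgroup H (aut_group n)"
    and "solvable ((aut_group n) \<lparr>carrier := H\<rparr>)"
    and "jonq n \<subseteq> H"
  shows "H = jonq n"
proof (rule ccontr)
  assume ne: "H \<noteq> jonq n"
  let ?G = "aut_group n"
  note Hs = assms(2) and J = assms(4)
  obtain g where g: "g \<in> H" "g \<notin> jonq n" using ne J by blast
  have gA: "g \<in> aut n" using g Hs subgroup.subset by fastforce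
  have gp: "g \<in> poly_map n" using gA by (simp add: aut_def)
  obtain a i j where aij: "j < i" "i < n" "Dc (\<lambda>p. g p i) a j \<noteq> 0"
    using tri_of_D[OF gA] g(2) by blast
  define K where "K = lim0 n H"
  have K: "subgroup K ?G" unfolding K_def by (rule lim0_subgroup[OF Hs])
  have JK: "jonq n \<subseteq> K" unfolding K_def using lim0_incl[OF Hs] J by blast
  define C where "C = Dc (\<lambda>p. g p i) a"
  define L where "L = (\<lambda>(x::nat\<Rightarrow>complex) i. if i < n then (\<Sum>k<n. Dc (\<lambda>p. g p i) a k * x k) else 0)"
  have LK: "L \<in> K" using lim_lin[OF Hs J g(1), of a] famOf_zero[OF gp, of a] by (simp add: K_def L_def)
  have Llin: "islin L" unfolding L_def by (rule lin_matrix)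
  define j0 where "j0 = (LEAST k. C k \<noteq> 0)"
  have Cj0: "C j0 \<noteq> 0" unfolding j0_def by (rule LeastI[of _ j]) (use aij in \<open>simp add: C_def\<close>)
  have j0j: "j0 \<le> j" unfolding j0_def by (rule Least_le) (use aij in \<open>simp add: C_def\<close>)
  have Cz: "\<forall>k<j0. C k = 0" unfolding j0_def using not_less_Least by blast
  have j0i: "j0 < i" and j0n: "j0 < n" using j0j aij by auto
  define w where "w = (\<lambda>s. if j0 < s then - C s / C j0 else 0)"
  have b2K: "sh n j0 w \<in> K" using sh_jonq[of j0 w n] JK by (auto simp: w_def)
  define M where "M = L \<circ> sh n j0 w"
  have MK: "M \<in> K" using subgroup.m_closed[OF K LK b2K] by (simp add: M_def)
  have Mlin: "islin M" unfolding M_def by (rule islin_comp[OF Llin sh_lin])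
  have Mi: "\<forall>p. M p i = C j0 * p j0"
    using M_row[OF j0n Cz Cj0] aij by (simp add: M_def L_def C_def w_def)
  obtain r s where rs: "j0 < r" "r < n" "s \<noteq> 0" "el n r j0 s \<in> K"
    using step_el[OF K JK MK Mlin Cj0 j0i aij(2) Mi] by blast
  have E: "\<forall>t. t \<noteq> 0 \<longrightarrow> el n r j0 t \<in> K"
    using el_scale[OF K JK rs(4) rs(3)] rs j0n by auto
  obtain k where k: "(derived ?G ^^ k) H = {aff_id n}" using derived_H[OF Hs assms(3)] by blast
  have "el n r j0 1 \<in> (derived ?G ^^ k) K" using sl2[OF K JK rs(1,2) E] by simp
  also have "\<dots> \<subseteq> lim0 n ((derived ?G ^^ k) H)" unfolding K_def by (rule lim0_derived_pow[OF Hs])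
  also have "\<dots> \<subseteq> {aff_id n}" using k lim0_triv by simp
  finally have "el n r j0 1 = aff_id n" by simp
  then have "el n r j0 1 (ek j0) r = aff_id n (ek j0) r" by simp
  then show False using rs j0n by (simp add: el_def aff_id_def ek_def)
qed

end
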